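(* The formal system CC (Constructive Concepts) is consistent; that is, $\bot$ is not a theorem of CC.
   Context: The language of CC is the first-order language of set theory (binary relation symbols $\in$ and $=$), augmented by a unary logical operator $\Box$ (read "is provable"). Formulas are built up in the usual way from atomic formulas using $\wedge,\vee,\to,\forall,\exists$, with the additional clause that if $A$ is a formula then so is $\Box A$. The symbol $\bot$ abbreviates the sentence $(\forall x)(\forall y)(x\in y)$, and $\neg A$ abbreviates $A\to\bot$. CC consists of the axioms and deduction rules of intuitionistic predicate calculus with equality, together with: (1) $A\to\Box A$; (2) $\Box(A\wedge B)\leftrightarrow(\Box A\wedge\Box B)$; (3) $\Box(A\vee B)\leftrightarrow(\Box A\vee\Box B)$; (4) $\Box((\exists x)A)\leftrightarrow(\exists x)\Box A$; (5) $\Box((\forall x)A)\leftrightarrow(\forall x)\Box A$; (6) $\Box(A\to B)\to(\Box A\to\Box B)$; the deduction rule: from $\Box A$ infer $A$; (7) extensionality: $x=y\leftrightarrow(\forall u)(u\in x\leftrightarrow u\in y)$; (8) comprehension scheme: $(\exists x)(\forall r)(r\in x\leftrightarrow\Box A)$, where $r$ is a fixed variable, $x$ is any variable, and $A$ is any formula (of the language with $\Box$) in which $x$ does not occur free. Here $A,B$ range over all formulas of the language. *)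

theory Defs
  imports Main
begin

datatype form =
    Mem nat nat
  | Eq nat nat
  | Conj form form
  | Disj form form
  | Imp form form
  | All nat form
  | Ex nat form
  | Box form

fun fv :: "form \<Rightarrow> nat set" where
  "fv (Mem x y) = {x, y}"
| "fv (Eq x y) = {x, y}"
| "fv (Conj A B) = fv A \<union> fv B"
| "fv (Disj A B) = fv A \<union> fv B"
| "fv (Imp A B) = fv A \<union> fv B"
| "fv (All x A) = fv A - {x}"
| "fv (Ex x A) = fv A - {x}"
| "fv (Box A) = fv A"

text \<open>subst A x t: replace every free occurrence of variable x in A by variable t
  (no renaming; used only together with the side condition substitutable).\<close>

definition sv :: "nat \<Rightarrow> nat \<Rightarrow> nat \<Rightarrow> nat" where
  "sv x t z = (if z = x then t else z)"

fun subst :: "form \<Rightarrow> nat \<Rightarrow> nat \<Rightarrow> form" where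
  "subst (Mem a b) x t = Mem (sv x t a) (sv x t b)"
| "subst (Eq a b) x t = Eq (sv x t a) (sv x t b)"
| "subst (Conj A B) x t = Conj (subst A x t) (subst B x t)"
| "subst (Disj A B) x t = Disj (subst A x t) (subst B x t)"
| "subst (Imp A B) x t = Imp (subst A x t) (subst B x t)"
| "subst (All z A) x t = (if z = x then All z A else All z (subst A x t))"
| "subst (Ex z A) x t = (if z = x then Ex z A else Ex z (subst A x t))"
| "subst (Box A) x t = Box (subst A x t)"

text \<open>substitutable x t A: variable t is free for x in A (no free occurrence of x
  in A lies in the scope of a quantifier binding t).\<close>

fun substitutable :: "nat \<Rightarrow> nat \<Rightarrow> form \<Rightarrow> bool" where
  "substitutable x t (Mem a b) = True"
| "substitutable x t (Eq a b) = True"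
| "substitutable x t (Conj A B) = (substitutable x t A \<and> substitutable x t B)"
| "substitutable x t (Disj A B) = (substitutable x t A \<and> substitutable x t B)"
| "substitutable x t (Imp A B) = (substitutable x t A \<and> substitutable x t B)"
| "substitutable x t (All z A) =
     (z = x \<or> x \<notin> fv A \<or> (z \<noteq> t \<and> substitutable x t A))"
| "substitutable x t (Ex z A) =
     (z = x \<or> x \<notin> fv A \<or> (z \<noteq> t \<and> substitutable x t A))"
| "substitutable x t (Box A) = substitutable x t A"

definition Iff :: "form \<Rightarrow> form \<Rightarrow> form" where
  "Iff A B = Conj (Imp A B) (Imp B A)"

definition Bot :: form where
  "Bot = All 0 (All 1 (Mem 0 1))"

definition rvar :: nat where "rvar = 0"

inductive CC_thm :: "form \<Rightarrow> bool" where
  ax_K: "CC_thm (Imp A (Imp B A))"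
| ax_S: "CC_thm (Imp (Imp A (Imp B C)) (Imp (Imp A B) (Imp A C)))"
| ax_conjE1: "CC_thm (Imp (Conj A B) A)"
| ax_conjE2: "CC_thm (Imp (Conj A B) B)"
| ax_conjI: "CC_thm (Imp A (Imp B (Conj A B)))"
| ax_disjI1: "CC_thm (Imp A (Disj A B))"
| ax_disjI2: "CC_thm (Imp B (Disj A B))"
| ax_disjE: "CC_thm (Imp (Imp A C) (Imp (Imp B C) (Imp (Disj A B) C)))"
| ax_efq: "CC_thm (Imp Bot A)"
| ax_allE: "substitutable x t A \<Longrightarrow> CC_thm (Imp (All x A) (subst A x t))"
| ax_exI: "substitutable x t A \<Longrightarrow> CC_thm (Imp (subst A x t) (Ex x A))"
| rule_allI: "CC_thm (Imp B A) \<Longrightarrow> x \<notin> fv B \<Longrightarrow> CC_thm (Imp B (All x A))"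
| rule_exE: "CC_thm (Imp A B) \<Longrightarrow> x \<notin> fv B \<Longrightarrow> CC_thm (Imp (Ex x A) B)"
| ax_refl: "CC_thm (Eq x x)"
| ax_subst: "substitutable z x A \<Longrightarrow> substitutable z y A \<Longrightarrow>
    CC_thm (Imp (Eq x y) (Imp (subst A z x) (subst A z y)))"
| rule_mp: "CC_thm (Imp A B) \<Longrightarrow> CC_thm A \<Longrightarrow> CC_thm B"
| ax1: "CC_thm (Imp A (Box A))"
| ax2: "CC_thm (Iff (Box (Conj A B)) (Conj (Box A) (Box B)))"
| ax3: "CC_thm (Iff (Box (Disj A B)) (Disj (Box A) (Box B)))"
| ax4: "CC_thm (Iff (Box (Ex x A)) (Ex x (Box A)))"
| ax5: "CC_thm (Iff (Box (All x A)) (All x (Box A)))"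
| ax6: "CC_thm (Imp (Box (Imp A B)) (Imp (Box A) (Box B)))"
| rule_box: "CC_thm (Box A) \<Longrightarrow> CC_thm A"
| ax7: "u \<noteq> x \<Longrightarrow> u \<noteq> y \<Longrightarrow>
    CC_thm (Iff (Eq x y) (All u (Iff (Mem u x) (Mem u y))))"
| ax8: "x \<noteq> rvar \<Longrightarrow> x \<notin> fv A \<Longrightarrow>
    CC_thm (Ex x (All rvar (Iff (Mem rvar x) (Box A))))"

end

theory Submission
  imports Defs
begin

datatype dom = E | C form "nat \<Rightarrow> dom"

fun ev :: "(nat \<Rightarrow> dom \<Rightarrow> dom \<Rightarrow> bool) \<Rightarrow> nat \<Rightarrow> (nat \<Rightarrow> dom) \<Rightarrow> form \<Rightarrow> bool" where
  "ev M n e (Mem a b) = M n (e a) (e b)"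
| "ev M n e (Eq a b) = (\<forall>k\<le>n. \<forall>u. M k u (e a) = M k u (e b))"
| "ev M n e (Conj A B) = (ev M n e A \<and> ev M n e B)"
| "ev M n e (Disj A B) = (ev M n e A \<or> ev M n e B)"
| "ev M n e (Imp A B) = (\<forall>k\<le>n. ev M k e A \<longrightarrow> ev M k e B)"
| "ev M n e (All x A) = (\<forall>k\<le>n. \<forall>d. ev M k (e(x:=d)) A)"
| "ev M n e (Ex x A) = (\<exists>d. ev M n (e(x:=d)) A)"
| "ev M n e (Box A) = (n = 0 \<or> ev M (n - 1) e A)"

lemma ev_cong: "(\<forall>i\<le>n. M i = M' i) \<Longrightarrow> ev M n e A = ev M' n e A"
proof (induction A arbitrary: n e)
  case (Box A)
  then show ?case by (cases n) auto
qed auto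

primrec T :: "nat \<Rightarrow> nat \<Rightarrow> dom \<Rightarrow> dom \<Rightarrow> bool" where
  "T 0 = (\<lambda>k u z. z \<noteq> E)"
| "T (Suc n) = (\<lambda>k u z. if k \<le> n then T n k u z else
      (case z of E \<Rightarrow> False | C A env \<Rightarrow> ev (T n) n (env(rvar:=u)) A))"

definition mem :: "nat \<Rightarrow> dom \<Rightarrow> dom \<Rightarrow> bool" where
  "mem k = T k k"

lemma T_stable: "k \<le> n \<Longrightarrow> T n k = mem k"
proof (induction n)
  case 0 then show ?case by (simp add: mem_def)
next
  case (Suc n)
  show ?case
  proof (cases "k \<le> n")
    case True
    then show ?thesis using Suc by (auto simp: fun_eq_iff)
  next
    case False
    then have "k = Suc n" using Suc by simp
    then show ?thesis by (simp add: mem_def)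
  qed
qed

lemma mem_0: "mem 0 u z = (z \<noteq> E)"
  by (simp add: mem_def)

lemma mem_E: "\<not> mem k u E"
  by (cases k) (auto simp: mem_def)

lemma mem_Suc_C: "mem (Suc n) u (C A env) = ev mem n (env(rvar:=u)) A"
proof -
  have "mem (Suc n) u (C A env) = ev (T n) n (env(rvar:=u)) A"
    by (simp add: mem_def)
  also have "\<dots> = ev mem n (env(rvar:=u)) A"
    by (rule ev_cong) (simp add: T_stable)
  finally show ?thesis .
qed

abbreviation sem where "sem \<equiv> ev mem"

lemma coinc: "(\<forall>v\<in>fv A. e v = e' v) \<Longrightarrow> ev M n e A = ev M n e' A"
proof (induction A arbitrary: n e e')
  case (All x A)
  have "\<And>k d. ev M k (e(x:=d)) A = ev M k (e'(x:=d)) A"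
    by (rule All.IH) (use All.prems in auto)
  then show ?case by simp
next
  case (Ex x A)
  have "\<And>k d. ev M k (e(x:=d)) A = ev M k (e'(x:=d)) A"
    by (rule Ex.IH) (use Ex.prems in auto)
  then show ?case by simp
next
  case (Conj A B)
  have "ev M n e A = ev M n e' A" "ev M n e B = ev M n e' B"
    by (rule Conj.IH; use Conj.prems in auto)+
  then show ?case by simp
next
  case (Disj A B)
  have "ev M n e A = ev M n e' A" "ev M n e B = ev M n e' B"
    by (rule Disj.IH; use Disj.prems in auto)+
  then show ?case by simp
next
  case (Imp A B)
  have "\<And>k. ev M k e A = ev M k e' A" "\<And>k. ev M k e B = ev M k e' B"
    by (rule Imp.IH; use Imp.prems in auto)+
  then show ?case by simp
next
  case (Box A)
  have "\<And>k. ev M k e A = ev M k e' A"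
    by (rule Box.IH; use Box.prems in auto)
  then show ?case by simp
qed auto

lemma subst_nofv: "x \<notin> fv A \<Longrightarrow> subst A x t = A"
  by (induction A) (auto simp: sv_def)

lemma subst_sem: "substitutable x t A \<Longrightarrow> ev M n e (subst A x t) = ev M n (e(x := e t)) A"
proof (induction A arbitrary: n e)
  case (Mem a b) then show ?case by (simp add: sv_def)
next
  case (Eq a b) then show ?case by (simp add: sv_def)
next
  case (All z A)
  show ?case
  proof (cases "z = x")
    case True
    have "e(x:=e t, x:=d) = e(x:=d)" for d by simp
    with True show ?thesis by (simp del: fun_upd_apply)
  next
    case False
    show ?thesis
    proof (cases "x \<in> fv A")
      case False2: False
      then have "subst A x t = A" by (rule subst_nofv)
      moreover have "\<And>k d. ev M k (e(z:=d)) A = ev M k (e(x:=e t, z:=d)) A"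
        by (rule coinc) (use False False2 in auto)
      ultimately show ?thesis using False by (simp del: fun_upd_apply)
    next
      case True
      with All.prems False have zt: "z \<noteq> t" and s: "substitutable x t A" by auto
      have "ev M k (e(z:=d)) (subst A x t) = ev M k (e(x:=e t, z:=d)) A" for k d
      proof -
        have "ev M k (e(z:=d)) (subst A x t) = ev M k ((e(z:=d))(x := (e(z:=d)) t)) A"
          by (rule All.IH[OF s])
        moreover have "(e(z:=d))(x := (e(z:=d)) t) = e(x:=e t, z:=d)"
          using zt False by (auto simp: fun_eq_iff)
        ultimately show ?thesis by simp
      qed
      then show ?thesis using False by (simp del: fun_upd_apply)
    qed
  qed
next
  case (Ex z A)
  show ?case
  proof (cases "z = x")
    case True
    have "e(x:=e t, x:=d) = e(x:=d)" for d by simp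
    with True show ?thesis by (simp del: fun_upd_apply)
  next
    case False
    show ?thesis
    proof (cases "x \<in> fv A")
      case False2: False
      then have "subst A x t = A" by (rule subst_nofv)
      moreover have "\<And>k d. ev M k (e(z:=d)) A = ev M k (e(x:=e t, z:=d)) A"
        by (rule coinc) (use False False2 in auto)
      ultimately show ?thesis using False by (simp del: fun_upd_apply)
    next
      case True
      with Ex.prems False have zt: "z \<noteq> t" and s: "substitutable x t A" by auto
      have "ev M k (e(z:=d)) (subst A x t) = ev M k (e(x:=e t, z:=d)) A" for k d
      proof -
        have "ev M k (e(z:=d)) (subst A x t) = ev M k ((e(z:=d))(x := (e(z:=d)) t)) A"
          by (rule Ex.IH[OF s])
        moreover have "(e(z:=d))(x := (e(z:=d)) t) = e(x:=e t, z:=d)"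
          using zt False by (auto simp: fun_eq_iff)
        ultimately show ?thesis by simp
      qed
      then show ?thesis using False by (simp del: fun_upd_apply)
    qed
  qed
qed auto

lemma ev_mono:
  assumes M: "\<And>k n u z. k \<le> n \<Longrightarrow> n \<le> N \<Longrightarrow> M n u z \<Longrightarrow> M k u z"
  shows "k \<le> n \<Longrightarrow> n \<le> N \<Longrightarrow> ev M n e A \<Longrightarrow> ev M k e A"
proof (induction A arbitrary: n k e)
  case (Mem a b) then show ?case using M by auto
next
  case (Box A)
  show ?case
  proof (cases "k = 0")
    case True then show ?thesis by simp
  next
    case False
    then have n: "n \<noteq> 0" using Box.prems by auto
    then have "ev M (n - 1) e A" using Box.prems by simp
    then have "ev M (k - 1) e A"
      by (rule Box.IH[of "k - 1" "n - 1", rotated 2]) (use Box.prems in auto)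
    then show ?thesis by simp
  qed
next
  case (Conj A B) then show ?case by auto
next
  case (Disj A B) then show ?case by auto
next
  case (Ex x A) then show ?case by auto
qed auto

lemma mem_mono_aux: "\<forall>k n u z. k \<le> n \<longrightarrow> n \<le> N \<longrightarrow> mem n u z \<longrightarrow> mem k u z"
proof (induction N)
  case 0 then show ?case by auto
next
  case (Suc N)
  have step: "mem (Suc N) u z \<Longrightarrow> mem N u z" for u z
  proof (cases z)
    case E then show "mem (Suc N) u z \<Longrightarrow> mem N u z" by (simp add: mem_E)
  next
    case (C A env)
    assume h: "mem (Suc N) u z"
    show "mem N u z"
    proof (cases N)
      case 0 then show ?thesis using C by (simp add: mem_0)
    next
      case (Suc m)
      have "ev mem N (env(rvar:=u)) A" using h C by (simp add: mem_Suc_C)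
      then have "ev mem m (env(rvar:=u)) A"
      proof -
        have M: "\<And>k n u z. k \<le> n \<Longrightarrow> n \<le> N \<Longrightarrow> mem n u z \<Longrightarrow> mem k u z"
          using Suc.IH by blast
        show ?thesis using ev_mono[where N=N and M=mem and k=m and n=N] M Suc \<open>ev mem N (env(rvar:=u)) A\<close> by simp
      qed
      then show ?thesis using C Suc by (simp add: mem_Suc_C)
    qed
  qed
  show ?case
  proof (intro allI impI)
    fix k n u z assume a: "k \<le> n" "n \<le> Suc N" "mem n u z"
    show "mem k u z"
    proof (cases "n \<le> N")
      case True then show ?thesis using Suc.IH a by blast
    next
      case False
      then have n: "n = Suc N" using a by simp
      show ?thesis
      proof (cases "k = Suc N")
        case True then show ?thesis using a n by simp
      next
        case False
        then have "k \<le> N" using a n by simp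
        moreover have "mem N u z" using step a n by simp
        ultimately show ?thesis using Suc.IH by blast
      qed
    qed
  qed
qed

lemma mem_mono: "k \<le> n \<Longrightarrow> mem n u z \<Longrightarrow> mem k u z"
  using mem_mono_aux by blast

lemma sem_mono: "k \<le> n \<Longrightarrow> sem n e A \<Longrightarrow> sem k e A"
  by (rule ev_mono[of n]) (auto intro: mem_mono)

definition eqv :: "nat \<Rightarrow> dom \<Rightarrow> dom \<Rightarrow> bool" where
  "eqv k a b = (\<forall>j\<le>k. \<forall>u. mem j u a = mem j u b)"

lemma eqv_refl: "eqv k a a" by (simp add: eqv_def)

lemma eqv_mono: "eqv k a b \<Longrightarrow> i \<le> k \<Longrightarrow> eqv i a b" by (simp add: eqv_def)

lemma sem_eqv:
  assumes H: "\<And>j u u' w. j \<le> k \<Longrightarrow> eqv j u u' \<Longrightarrow> mem j u w = mem j u' w"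
  shows "j \<le> k \<Longrightarrow> (\<forall>v. eqv j (e v) (e' v)) \<Longrightarrow> sem j e A = sem j e' A"
proof (induction A arbitrary: j e e')
  case (Mem a b)
  have "mem j (e a) (e b) = mem j (e' a) (e b)" using H Mem by blast
  also have "\<dots> = mem j (e' a) (e' b)" using Mem.prems(2) by (simp add: eqv_def)
  finally show ?case by simp
next
  case (Eq a b)
  then show ?case by (auto simp: eqv_def)
next
  case (Conj A B) then show ?case by simp
next
  case (Disj A B) then show ?case by simp
next
  case (Imp A B)
  have "\<And>i. i \<le> j \<Longrightarrow> sem i e A = sem i e' A \<and> sem i e B = sem i e' B"
  proof -
    fix i assume i: "i \<le> j"
    have p: "i \<le> k" "\<forall>v. eqv i (e v) (e' v)" using i Imp.prems by (auto intro: eqv_mono)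
    show "sem i e A = sem i e' A \<and> sem i e B = sem i e' B"
      using Imp.IH(1)[OF p] Imp.IH(2)[OF p] by simp
  qed
  then show ?case by auto
next
  case (All x A)
  have "\<And>i d. i \<le> j \<Longrightarrow> sem i (e(x:=d)) A = sem i (e'(x:=d)) A"
  proof -
    fix i d assume "i \<le> j"
    show "sem i (e(x:=d)) A = sem i (e'(x:=d)) A"
    proof (rule All.IH)
      show "i \<le> k" using \<open>i \<le> j\<close> All.prems by simp
      show "\<forall>v. eqv i ((e(x:=d)) v) ((e'(x:=d)) v)"
        using All.prems \<open>i \<le> j\<close> by (auto simp: eqv_refl intro: eqv_mono)
    qed
  qed
  then show ?case by auto
next
  case (Ex x A)
  have "\<And>d. sem j (e(x:=d)) A = sem j (e'(x:=d)) A"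
    using Ex.IH Ex.prems eqv_refl by simp
  then show ?case by auto
next
  case (Box A)
  show ?case
  proof (cases j)
    case 0 then show ?thesis by simp
  next
    case (Suc i)
    have "sem i e A = sem i e' A"
      by (rule Box.IH) (use Box.prems Suc in \<open>auto intro: eqv_mono\<close>)
    then show ?thesis using Suc by simp
  qed
qed

lemma mem_left_aux: "\<forall>i\<le>N. \<forall>u u' w. eqv i u u' \<longrightarrow> mem i u w = mem i u' w"
proof (induction N)
  case 0 then show ?case by (simp add: mem_0)
next
  case (Suc N)
  show ?case
  proof (intro allI impI)
    fix i u u' w assume a: "i \<le> Suc N" "eqv i u u'"
    show "mem i u w = mem i u' w"
    proof (cases "i \<le> N")
      case True then show ?thesis using Suc.IH a by blast
    next
      case False
      then have i: "i = Suc N" using a by simp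
      show ?thesis
      proof (cases w)
        case E then show ?thesis by (simp add: mem_E)
      next
        case (C B env)
        have "sem N (env(rvar:=u)) B = sem N (env(rvar:=u')) B"
        proof (rule sem_eqv[of N])
          show "\<And>j u u' w. j \<le> N \<Longrightarrow> eqv j u u' \<Longrightarrow> mem j u w = mem j u' w"
            using Suc.IH by blast
          show "\<forall>v. eqv N ((env(rvar := u)) v) ((env(rvar := u')) v)"
            using a i eqv_mono eqv_refl by simp
        qed simp
        then show ?thesis using C i by (simp add: mem_Suc_C)
      qed
    qed
  qed
qed

lemma sem_eqv': "(\<forall>v. eqv j (e v) (e' v)) \<Longrightarrow> sem j e A = sem j e' A"
  by (rule sem_eqv[of j]) (use mem_left_aux in blast)+

lemma sem_Iff: "sem n e (Iff A B) = (\<forall>k\<le>n. sem k e A = sem k e B)"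
  by (auto simp: Iff_def)

lemma sem_Bot: "\<not> sem n e Bot"
  unfolding Bot_def by (simp, metis mem_E order_refl)

lemma sound: "CC_thm A \<Longrightarrow> sem n e A"
proof (induction A arbitrary: n e rule: CC_thm.induct)
  case (ax_K A B) then show ?case by (auto intro: sem_mono)
next
  case (ax_S A B C) then show ?case by simp (meson order_refl order_trans)
next
  case (ax_conjE1 A B) then show ?case by auto
next
  case (ax_conjE2 A B) then show ?case by auto
next
  case (ax_conjI A B) then show ?case by (auto intro: sem_mono)
next
  case (ax_disjI1 A B) then show ?case by auto
next
  case (ax_disjI2 B A) then show ?case by auto
next
  case (ax_disjE A C B) then show ?case by simp
next
  case (ax_efq A) then show ?case using sem_Bot by auto
next
  case (ax_allE x t A)
  show ?case
  proof (simp only: ev.simps, intro allI impI)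
    fix k assume "k \<le> n" "\<forall>j\<le>k. \<forall>d. sem j (e(x := d)) A"
    then have "sem k (e(x := e t)) A" by simp
    then show "sem k e (subst A x t)" using subst_sem[OF ax_allE] by simp
  qed
next
  case (ax_exI x t A)
  show ?case
  proof (simp only: ev.simps, intro allI impI)
    fix k assume "k \<le> n" "sem k e (subst A x t)"
    then have "sem k (e(x := e t)) A" using subst_sem[OF ax_exI] by simp
    then show "\<exists>d. sem k (e(x := d)) A" by blast
  qed
next
  case (rule_allI B A x)
  show ?case
  proof (simp only: ev.simps, intro allI impI)
    fix k j d assume k: "k \<le> n" "sem k e B" "j \<le> k"
    have "sem j e B" using k sem_mono by blast
    moreover have "sem j e B = sem j (e(x:=d)) B" by (rule coinc) (use rule_allI in auto)
    ultimately have "sem j (e(x:=d)) B" by simp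
    moreover have "sem j (e(x:=d)) (Imp B A)" by (rule rule_allI.IH)
    ultimately show "sem j (e(x:=d)) A" unfolding ev.simps(5) by blast
  qed
next
  case (rule_exE A B x)
  show ?case
  proof (simp only: ev.simps, intro allI impI)
    fix k assume k: "k \<le> n" "\<exists>d. sem k (e(x:=d)) A"
    then obtain d where "sem k (e(x:=d)) A" by blast
    moreover have "sem k (e(x:=d)) (Imp A B)" by (rule rule_exE.IH)
    ultimately have "sem k (e(x:=d)) B" unfolding ev.simps(5) by blast
    moreover have "sem k e B = sem k (e(x:=d)) B" by (rule coinc) (use rule_exE in auto)
    ultimately show "sem k e B" by simp
  qed
next
  case (ax_refl x) then show ?case by auto
next
  case (ax_subst z x A y)
  show ?case
  proof (simp only: ev.simps, intro allI impI)
    fix k j assume k: "k \<le> n" "\<forall>i\<le>k. \<forall>u. mem i u (e x) = mem i u (e y)" "j \<le> k"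
      "sem j e (subst A z x)"
    have "sem j (e(z := e x)) A" using k(4) subst_sem[OF ax_subst(1)] by simp
    moreover have "sem j (e(z := e x)) A = sem j (e(z := e y)) A"
    proof (rule sem_eqv')
      have "eqv j (e x) (e y)" using k by (auto simp: eqv_def)
      then show "\<forall>v. eqv j ((e(z := e x)) v) ((e(z := e y)) v)"
        by (auto simp: eqv_refl)
    qed
    ultimately show "sem j e (subst A z y)" using subst_sem[OF ax_subst(2)] by simp
  qed
next
  case (rule_mp A B) then show ?case by auto
next
  case (ax1 A) then show ?case using sem_mono[of "k - 1" k e A for k] by auto
next
  case (ax2 A B) then show ?case by (auto simp: sem_Iff)
next
  case (ax3 A B) then show ?case by (auto simp: sem_Iff)
next
  case (ax4 x A) then show ?case by (auto simp: sem_Iff)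
next
  case (ax5 x A)
  show ?case unfolding sem_Iff
  proof (intro allI impI)
    fix k assume "k \<le> n"
    show "sem k e (Box (All x A)) = sem k e (All x (Box A))"
    proof (cases k)
      case 0 then show ?thesis by simp
    next
      case (Suc m)
      have "(\<forall>i\<le>m. \<forall>d. sem i (e(x:=d)) A) = (\<forall>i\<le>Suc m. \<forall>d. i = 0 \<or> sem (i - 1) (e(x:=d)) A)"
      proof
        assume h: "\<forall>i\<le>m. \<forall>d. sem i (e(x:=d)) A"
        show "\<forall>i\<le>Suc m. \<forall>d. i = 0 \<or> sem (i - 1) (e(x:=d)) A"
        proof (intro allI impI)
          fix i d assume "i \<le> Suc m"
          then show "i = 0 \<or> sem (i - 1) (e(x:=d)) A" using h by (cases i) auto
        qed
      next
        assume h: "\<forall>i\<le>Suc m. \<forall>d. i = 0 \<or> sem (i - 1) (e(x:=d)) A"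
        show "\<forall>i\<le>m. \<forall>d. sem i (e(x:=d)) A"
        proof (intro allI impI)
          fix i d assume "i \<le> m"
          then show "sem i (e(x:=d)) A" using h[rule_format, of "Suc i" d] by simp
        qed
      qed
      then show ?thesis using Suc by simp
    qed
  qed
next
  case (ax6 A B)
  show ?case
  proof (simp only: ev.simps, intro allI impI)
    fix k j assume k: "k \<le> n" "k = 0 \<or> (\<forall>i\<le>k - 1. sem i e A \<longrightarrow> sem i e B)" "j \<le> k"
      "j = 0 \<or> sem (j - 1) e A"
    show "j = 0 \<or> sem (j - 1) e B"
    proof (cases "j = 0")
      case False
      then have "k \<noteq> 0" "j - 1 \<le> k - 1" using k by auto
      then show ?thesis using k False by auto
    qed simp
  qed
next
  case (rule_box A)
  then show ?case using rule_box.IH[of "Suc n" e] by simp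
next
  case (ax7 u x y) then show ?case by (auto simp: sem_Iff)
next
  case (ax8 x A)
  show ?case
  proof (simp only: ev.simps, intro exI[of _ "C A e"] allI impI)
    fix k r assume "k \<le> n"
    show "sem k (e(x := C A e, rvar := r)) (Iff (Mem rvar x) (Box A))"
      unfolding sem_Iff
    proof (intro allI impI)
      fix j assume "j \<le> k"
      have ex: "(e(x := C A e, rvar := r)) x = C A e" using ax8 by simp
      have co: "sem m (e(x := C A e, rvar := r)) A = sem m (e(rvar := r)) A" for m
        by (rule coinc) (use ax8 in auto)
      show "sem j (e(x := C A e, rvar := r)) (Mem rvar x) = sem j (e(x := C A e, rvar := r)) (Box A)"
      proof (cases j)
        case 0 then show ?thesis using ex by (simp add: mem_0)
      next
        case (Suc m)
        then show ?thesis using ex co by (simp add: mem_Suc_C)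
      qed
    qed
  qed
qed

theorem theorem5p1:
  shows "\<not> CC_thm Bot"
  using sound sem_Bot by blast

end
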